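(* For an integer $n$ and real $x$, define $$S_n(x)=(18n+24)\sin(x)-(9n+27)\sin((n+1)x)+9n\sin((n+2)x)+2\sin(4x)-\sin(5x)$$ and $$L_n(x)=(18n+24)\sin(x)-18n\sin(x/2)-29.1.$$ Then for all integers $n\geq 21$ and all $x\in(0,2\pi/3)$, $S_n(x)>L_n(x)$. *)

theory Defs
  imports Complex_Main
begin

definition S :: "int \<Rightarrow> real \<Rightarrow> real" where
  "S n x = (18 * of_int n + 24) * sin x - (9 * of_int n + 27) * sin ((of_int n + 1) * x)
          + 9 * of_int n * sin ((of_int n + 2) * x) + 2 * sin (4 * x) - sin (5 * x)"

definition L :: "int \<Rightarrow> real \<Rightarrow> real" where
  "L n x = (18 * of_int n + 24) * sin x - 18 * of_int n * sin (x / 2) - 29.1"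

end

theory Submission
  imports Defs
begin

lemma core:
  fixes u t c s :: real
  assumes u1: "38/100 \<le> u" and u2: "u \<le> 87/100" and sc: "s^2 + c^2 = 1" and ts: "t^2 \<le> s^2"
  shows "378*u*(1+c) - 27*(t - c*u) + 261/10 > 0"
proof -
  have c2: "c^2 \<le> 1" using sc zero_le_power2[of s] by linarith
  have c1: "-1 \<le> c" using c2 by (simp add: abs_square_le_1 abs_le_iff)
  have t2: "t^2 \<le> 1" using sc ts zero_le_power2[of c] by linarith
  have t1: "t \<le> 1" using t2 by (simp add: abs_square_le_1 abs_le_iff)
  have u0: "0 \<le> u" using u1 by simp
  show ?thesis
  proof (cases "c \<ge> -0.9")
    case True
    have a: "u*(1+c) \<ge> u*(1/10)" using True u0 by (intro mult_left_mono) auto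
    have b: "u*c \<ge> u*(-1)" using c1 u0 by (intro mult_left_mono) auto
    have e: "378*u*(1+c) - 27*(t - c*u) + 261/10 = 378*(u*(1+c)) - 27*t + 27*(u*c) + 261/10"
      by (simp add: algebra_simps)
    show ?thesis unfolding e using a b t1 u1 by linarith
  next
    case False
    define d where "d = 1 + c"
    have d0: "0 \<le> d" using c1 unfolding d_def by simp
    have d1: "d \<le> 1/10" using False unfolding d_def by simp
    have "s^2 = d*(2-d)" using sc unfolding d_def by (simp add: algebra_simps power2_eq_square)
    also have "\<dots> \<le> d*2" using d0 by (intro mult_left_mono) auto
    finally have td: "t^2 \<le> 2*d" using ts by simp
    have ud: "u*d \<ge> (38/100)*d" using u1 d0 by (intro mult_right_mono) auto
    have R: "261/10 - 27*u + 405*(u*d) \<ge> 261/100 + 153*d" using ud u2 d0 by linarith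
    have q: "1458*d < (261/100 + 153*d)^2"
    proof -
      have "(261/100 + 153*d)^2 - 1458*d = 23409*(d - 32967/2340900)^2 + (68121/10000 - 23409*(32967/2340900)^2)"
        by (simp add: power2_eq_square algebra_simps)
      moreover have "(68121/10000 - 23409*(32967/2340900)^2::real) > 0" by (simp add: power2_eq_square)
      ultimately show ?thesis using zero_le_power2[of "d - 32967/2340900"] by linarith
    qed
    have "(27*t)^2 < (261/10 - 27*u + 405*(u*d))^2"
    proof -
      have "(27*t)^2 \<le> 1458*d" using td by (simp add: power_mult_distrib)
      also have "\<dots> < (261/100 + 153*d)^2" by (rule q)
      also have "\<dots> \<le> (261/10 - 27*u + 405*(u*d))^2" using R d0 by (intro power_mono) auto
      finally show ?thesis .
    qed
    hence sq: "(abs (27*t))^2 < (261/10 - 27*u + 405*(u*d))^2" by simp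
    have R0: "0 \<le> 261/10 - 27*u + 405*(u*d)" using R d0 by linarith
    have "abs (27*t) < 261/10 - 27*u + 405*(u*d)"
      using power_less_imp_less_base[OF sq R0] .
    hence "27*t < 261/10 - 27*u + 405*(u*d)" by linarith
    moreover have "378*u*(1+c) - 27*(t - c*u) + 261/10 = 261/10 - 27*u + 405*(u*d) - 27*t"
      unfolding d_def by (simp add: algebra_simps)
    ultimately show ?thesis by simp
  qed
qed

theorem lemma3:
  fixes n :: int and x :: real
  assumes "n \<ge> 21" and "0 < x" and "x < 2 * pi / 3"
  shows "S n x > L n x"
proof -
  define N where "N = real_of_int n"
  have N: "N \<ge> 21" using assms(1) unfolding N_def by simp
  define th where "th = (N + 3/2) * x"
  define u where "u = sin (x/2)"
  define cp where "cp = cos (x/2)"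
  have e1: "(N + 1) * x = th - x/2" unfolding th_def by (simp add: algebra_simps)
  have e2: "(N + 2) * x = th + x/2" unfolding th_def by (simp add: algebra_simps)
  have s1: "sin ((N+1)*x) = sin th * cp - cos th * u"
    unfolding e1 u_def cp_def by (simp add: sin_diff)
  have s2: "sin ((N+2)*x) = sin th * cp + cos th * u"
    unfolding e2 u_def cp_def by (simp add: sin_add)
  have diff: "S n x - L n x = 18*N*u*(1 + cos th) - 27*sin ((N+1)*x)
      + 2*sin (4*x) - sin (5*x) + 29.1"
    unfolding S_def L_def N_def[symmetric] s1 s2 u_def[symmetric]
    by (simp add: algebra_simps)
  have u0: "u \<ge> 0" unfolding u_def using assms by (intro sin_ge_zero) auto
  have c0: "1 + cos th \<ge> 0" by (smt (verit) cos_ge_minus_one)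
  have nn: "18*N*u*(1 + cos th) \<ge> 378*u*(1 + cos th)"
    using N u0 c0 by (intro mult_right_mono) auto
  show ?thesis
  proof (cases "x \<le> pi/4")
    case True
    have "sin (4*x) \<ge> 0" using True assms by (intro sin_ge_zero) auto
    moreover have "sin (5*x) \<le> 1" by simp
    moreover have "sin ((N+1)*x) \<le> 1" by simp
    moreover have "378*u*(1 + cos th) \<ge> 0" using u0 c0 by simp
    ultimately show ?thesis using diff nn by linarith
  next
    case False
    have "sin (4*x) \<ge> -1" "sin (5*x) \<le> 1" by simp_all
    have cx: "cos x = 1 - 2*u^2" unfolding u_def using cos_double_sin[of "x/2"] by simp
    have "cos x < cos (pi/4)" using False assms by (intro cos_monotone_0_pi) auto
    hence "u^2 > (1 - sqrt 2/2)/2" using cx by (simp add: cos_45)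
    moreover have "sqrt 2 < 142/100" by (rule real_less_lsqrt) (auto simp: power2_eq_square)
    ultimately have "u^2 > 1444/10000" by (simp add: field_simps)
    have ul: "u \<ge> (38/100)"
    proof (rule ccontr)
      assume "\<not> u \<ge> (38/100)"
      hence "u^2 < (38/100)^2" using u0 by (intro power_strict_mono) auto
      thus False using \<open>u^2 > 1444/10000\<close> by (simp add: power2_eq_square)
    qed
    have "cos x > cos (2*pi/3)" using assms by (intro cos_monotone_0_pi) auto
    moreover have "cos (2*pi/3) = -1/2"
    proof -
      have "cos (2*pi/3) = cos (pi - pi/3)" by (simp add: field_simps)
      also have "\<dots> = -1/2" by (simp only: cos_pi_minus cos_60)
      finally show ?thesis .
    qed
    ultimately have "u^2 < 3/4" using cx by linarith
    have uh: "u \<le> (87/100)"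
    proof (rule ccontr)
      assume "\<not> u \<le> (87/100)"
      hence "(87/100)^2 < u^2" by (intro power_strict_mono) auto
      thus False using \<open>u^2 < 3/4\<close> by (simp add: power2_eq_square)
    qed
    have cp2: "cp^2 \<le> 1" unfolding cp_def using sin_cos_squared_add[of "x/2"] zero_le_power2[of "sin (x/2)"] by linarith
    have "(sin th * cp)^2 \<le> (sin th)^2"
      unfolding power_mult_distrib using cp2 by (simp add: mult_left_le)
    have "378*u*(1+cos th) - 27*(sin th * cp - cos th * u) + 261/10 > 0"
      by (rule core[OF ul uh _ \<open>(sin th * cp)^2 \<le> (sin th)^2\<close>]) simp
    then show ?thesis using diff[unfolded s1] nn \<open>sin (4*x) \<ge> -1\<close> \<open>sin (5*x) \<le> 1\<close> by linarith
  qed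
qed

end
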